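(* Let $\beta,p,n$ be positive integers and $\mathcal{S}=\mathcal{S}_n(\beta,p)$. If $G_1,\ldots,G_M$ are pairwise disjoint $\mathcal{S}$-good subsets of $V_n$, then there exists a $(1,\beta,p)$-constrained code on $n$ cells of size $M$. In particular, if $G$ is an $\mathcal{S}$-good $(n,k)$ binary linear code, then there exists a $(1,\beta,p)$-constrained code with rate $\frac{n-k}{n}$.
   Context: $V_n=\{0,1\}^n$ with componentwise addition mod 2. A binary vector is $(\beta,p)$-window-weight-limited if every $\beta$ consecutive entries contain at most $p$ ones; $\mathcal{S}_n(\beta,p)$ is the set of such vectors of length $n$. For $B_1,B_2\subseteq V_n$, $B_1+B_2=\{\mathbf{b}_1+\mathbf{b}_2:\mathbf{b}_1\in B_1,\mathbf{b}_2\in B_2\}$. A subset $B\subseteq V_n$ is $\mathcal{S}$-good if $\mathcal{S}+B=V_n$. An $(n,k)$ linear code is a $k$-dimensional subspace of $V_n$. A code on $n$ binary cells consists, for each write $i\ge1$, of an encoder $\mathcal{E}_i:\{1,\ldots,M_i\}\times\{0,1\}^n\to\{0,1\}^n$ and decoder $\mathcal{D}_i:\{0,1\}^n\to\{1,\ldots,M_i\}$ with $\mathcal{D}_i(\mathcal{E}_i(m,\mathbf{u}))=m$ (the decoder sees only the new state); it has size $M$ if $M_i=M$ for all $i$, in which case its rate is $\frac{\log_2M}{n}$. Starting from the zero state, messages produce states $\mathbf{v}_i=\mathcal{E}_i(m_i,\mathbf{v}_{i-1})$; the code is $(1,\beta,p)$-constrained if for every message sequence and every $i\ge0$, $\mathbf{v}_i+\mathbf{v}_{i+1}$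 has at most $p$ ones in every $\beta$ consecutive positions. *)

theory Defs
  imports Complex_Main "HOL-Library.Z2" "HOL-Library.Function_Algebras"
begin

text \<open>Binary vectors of length n: functions nat => bit vanishing from position n on
  (positions 0..n-1). Addition is pointwise addition in GF(2).\<close>

definition Vn :: "nat \<Rightarrow> (nat \<Rightarrow> bit) set" where
  "Vn n = {v. \<forall>i\<ge>n. v i = 0}"

definition window_weight_limited :: "nat \<Rightarrow> nat \<Rightarrow> nat \<Rightarrow> (nat \<Rightarrow> bit) \<Rightarrow> bool" where
  "window_weight_limited n \<beta> p v \<longleftrightarrow>
     v \<in> Vn n \<and> (\<forall>i. i + \<beta> \<le> n \<longrightarrow> card {j. i \<le> j \<and> j < i + \<beta> \<and> v j = 1} \<le> p)"

definition Sset :: "nat \<Rightarrow> nat \<Rightarrow> nat \<Rightarrow> (nat \<Rightarrow> bit) set" where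
  "Sset n \<beta> p = {v. window_weight_limited n \<beta> p v}"

definition setplus :: "(nat \<Rightarrow> bit) set \<Rightarrow> (nat \<Rightarrow> bit) set \<Rightarrow> (nat \<Rightarrow> bit) set" where
  "setplus A B = {a + b | a b. a \<in> A \<and> b \<in> B}"

definition S_good :: "nat \<Rightarrow> nat \<Rightarrow> nat \<Rightarrow> (nat \<Rightarrow> bit) set \<Rightarrow> bool" where
  "S_good n \<beta> p B \<longleftrightarrow> B \<subseteq> Vn n \<and> setplus (Sset n \<beta> p) B = Vn n"

definition linear_code :: "nat \<Rightarrow> nat \<Rightarrow> (nat \<Rightarrow> bit) set \<Rightarrow> bool" where
  "linear_code n k C \<longleftrightarrow>
     C \<subseteq> Vn n \<and> 0 \<in> C \<and> (\<forall>x\<in>C. \<forall>y\<in>C. x + y \<in> C) \<and>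
     (\<exists>B. B \<subseteq> C \<and> finite B \<and> card B = k \<and>
        (\<forall>c :: (nat \<Rightarrow> bit) \<Rightarrow> bit.
            (\<forall>i. (\<Sum>b\<in>B. c b * b i) = 0) \<longrightarrow> (\<forall>b\<in>B. c b = 0)) \<and>
        C = {(\<lambda>i. \<Sum>b\<in>B. c b * b i) | c. True})"

definition is_code :: "nat \<Rightarrow> nat \<Rightarrow> (nat \<Rightarrow> nat \<Rightarrow> (nat \<Rightarrow> bit) \<Rightarrow> (nat \<Rightarrow> bit))
                        \<Rightarrow> (nat \<Rightarrow> (nat \<Rightarrow> bit) \<Rightarrow> nat) \<Rightarrow> bool" where
  "is_code n M E D \<longleftrightarrow>
     (\<forall>i\<ge>1. \<forall>m\<in>{1..M}. \<forall>u\<in>Vn n. E i m u \<in> Vn n \<and> D i (E i m u) = m) \<and>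
     (\<forall>i\<ge>1. \<forall>v\<in>Vn n. D i v \<in> {1..M})"

primrec state :: "(nat \<Rightarrow> nat \<Rightarrow> (nat \<Rightarrow> bit) \<Rightarrow> (nat \<Rightarrow> bit)) \<Rightarrow> (nat \<Rightarrow> nat) \<Rightarrow> nat \<Rightarrow> (nat \<Rightarrow> bit)" where
  "state E ms 0 = 0"
| "state E ms (Suc i) = E (Suc i) (ms (Suc i)) (state E ms i)"

definition constrained :: "nat \<Rightarrow> nat \<Rightarrow> nat \<Rightarrow> nat \<Rightarrow> (nat \<Rightarrow> nat \<Rightarrow> (nat \<Rightarrow> bit) \<Rightarrow> (nat \<Rightarrow> bit)) \<Rightarrow> bool" where
  "constrained n \<beta> p M E \<longleftrightarrow>
     (\<forall>ms. (\<forall>i\<ge>1. ms i \<in> {1..M}) \<longrightarrow>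
        (\<forall>i. window_weight_limited n \<beta> p (state E ms i + state E ms (Suc i))))"

end

theory Submission
  imports Defs "HOL-Library.FuncSet"
begin
declare add_bit_eq_xor[simp del] mult_bit_eq_and[simp del]

lemma bit_add_self[simp]: "(x::bit) + x = 0" by (cases x) (simp_all del: add_bit_eq_xor)
lemma fun_add_self[simp]: "(u::nat\<Rightarrow>bit) + u = 0"
  by (rule ext) (simp del: add_bit_eq_xor)
lemma fun_add_cancel[simp]: "(u::nat\<Rightarrow>bit) + (u + s) = s"
  by (simp del: add_bit_eq_xor add: add.assoc[symmetric])

lemma Vn_add: "u \<in> Vn n \<Longrightarrow> v \<in> Vn n \<Longrightarrow> u + v \<in> Vn n"
  by (simp add: Vn_def)
lemma Vn_zero: "0 \<in> Vn n" by (simp add: Vn_def)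

lemma part1:
  assumes M: "0 < M" and good: "\<forall>i\<in>{1..M}. S_good n \<beta> p (G i)"
    and disj: "\<forall>i\<in>{1..M}. \<forall>j\<in>{1..M}. i \<noteq> j \<longrightarrow> G i \<inter> G j = {}"
  shows "\<exists>E D. is_code n M E D \<and> constrained n \<beta> p M E"
proof -
  define sel where "sel m u = (SOME s. s \<in> Sset n \<beta> p \<and> u + s \<in> G m)" for m u
  have selP: "sel m u \<in> Sset n \<beta> p \<and> u + sel m u \<in> G m" if "m \<in> {1..M}" "u \<in> Vn n" for m u
  proof -
    from good that have "u \<in> setplus (Sset n \<beta> p) (G m)" by (simp add: S_good_def)
    then obtain a b where ab: "u = a + b" "a \<in> Sset n \<beta> p" "b \<in> G m" by (auto simp: setplus_def)
    have "u + a = b" using ab(1) by (simp del: add_bit_eq_xor add: add.commute add.left_commute)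
    hence "\<exists>s. s \<in> Sset n \<beta> p \<and> u + s \<in> G m" using ab by auto
    thus ?thesis unfolding sel_def by (rule someI_ex)
  qed
  have GV: "G m \<subseteq> Vn n" if "m \<in> {1..M}" for m using good that by (simp add: S_good_def)
  define E where "E i m u = u + sel m u" for i :: nat and m u
  define D where "D i v = (if \<exists>m\<in>{1..M}. v \<in> G m then (THE m. m\<in>{1..M} \<and> v \<in> G m) else 1)"
    for i :: nat and v
  have Duniq: "D i v = m" if "m \<in> {1..M}" "v \<in> G m" for i m v
  proof -
    have "(THE m. m\<in>{1..M} \<and> v \<in> G m) = m"
      by (rule the_equality) (use that disj in blast)+
    thus ?thesis using that unfolding D_def by auto
  qed
  have code: "is_code n M E D"
    unfolding is_code_def
  proof (intro conjI allI impI ballI)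
    fix i m u assume "m \<in> {1..M}" "u \<in> Vn n"
    with selP GV show "E i m u \<in> Vn n" "D i (E i m u) = m"
      unfolding E_def by (auto intro: Duniq)
  next
    fix i v
    show "D i v \<in> {1..M}"
    proof (cases "\<exists>m\<in>{1..M}. v \<in> G m")
      case True
      then obtain m where "m\<in>{1..M}" "v \<in> G m" by blast
      thus ?thesis using Duniq by auto
    next
      case False thus ?thesis using M unfolding D_def by auto
    qed
  qed
  have cons: "constrained n \<beta> p M E"
    unfolding constrained_def
  proof (intro allI impI)
    fix ms :: "nat \<Rightarrow> nat" and i :: nat assume ms: "\<forall>i\<ge>1. ms i \<in> {1..M}"
    have sV: "state E ms j \<in> Vn n" for j
    proof (induction j)
      case 0 thus ?case by (simp add: Vn_def)
    next
      case (Suc j)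
      have "ms (Suc j) \<in> {1..M}" using ms by simp
      hence "state E ms j + sel (ms (Suc j)) (state E ms j) \<in> G (ms (Suc j))"
        using Suc selP by blast
      hence "state E ms j + sel (ms (Suc j)) (state E ms j) \<in> Vn n"
        using GV \<open>ms (Suc j) \<in> {1..M}\<close> by blast
      thus ?case unfolding state.simps by (subst E_def)
    qed
    have "ms (Suc i) \<in> {1..M}" using ms by simp
    hence "sel (ms (Suc i)) (state E ms i) \<in> Sset n \<beta> p" using selP sV by blast
    thus "window_weight_limited n \<beta> p (state E ms i + state E ms (Suc i))"
    proof -
      have "state E ms (Suc i) = state E ms i + sel (ms (Suc i)) (state E ms i)"
        unfolding state.simps by (subst E_def) (rule refl)
      hence "state E ms i + state E ms (Suc i) = sel (ms (Suc i)) (state E ms i)"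
        by (simp only: fun_add_cancel)
      thus ?thesis using \<open>sel (ms (Suc i)) (state E ms i) \<in> Sset n \<beta> p\<close>
        by (simp add: Sset_def)
    qed
  qed
  from code cons show ?thesis by blast
qed

lemma UNIV_bit: "(UNIV :: bit set) = {0, 1}" by (auto intro: bit.exhaust)
lemma card_UNIV_bit: "card (UNIV :: bit set) = 2" by (simp add: UNIV_bit)

lemma card_Vn: "finite (Vn n) \<and> card (Vn n) = 2 ^ n"
proof -
  have bij: "bij_betw (\<lambda>v. restrict v {..<n}) (Vn n) (PiE {..<n} (\<lambda>_. UNIV :: bit set))"
  proof (rule bij_betwI[where g = "\<lambda>f i. if i < n then f i else 0"])
    show "(\<lambda>v. restrict v {..<n}) \<in> Vn n \<rightarrow> PiE {..<n} (\<lambda>_. UNIV)" by auto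
    show "(\<lambda>f i. if i < n then f i else 0) \<in> PiE {..<n} (\<lambda>_. UNIV) \<rightarrow> Vn n"
      by (auto simp: Vn_def)
    show "(\<lambda>i. if i < n then restrict x {..<n} i else 0) = x" if "x \<in> Vn n" for x
      using that by (auto simp: Vn_def)
    show "restrict (\<lambda>i. if i < n then y i else 0) {..<n} = y" if "y \<in> PiE {..<n} (\<lambda>_. UNIV)" for y
      using that by (auto simp: PiE_def extensional_def)
  qed
  have fin: "finite (PiE {..<n} (\<lambda>_. UNIV :: bit set))"
    by (rule finite_PiE) (auto simp: UNIV_bit)
  have "card (PiE {..<n} (\<lambda>_. UNIV :: bit set)) = 2 ^ n"
    by (simp add: card_PiE card_UNIV_bit)
  with bij fin show ?thesis by (metis bij_betw_finite bij_betw_same_card)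
qed

lemma card_code:
  assumes "linear_code n k C"
  shows "card C = 2 ^ k"
proof -
  obtain B where B: "B \<subseteq> C" "finite B" "card B = k"
    and ind: "\<forall>c :: (nat \<Rightarrow> bit) \<Rightarrow> bit. (\<forall>i. (\<Sum>b\<in>B. c b * b i) = 0) \<longrightarrow> (\<forall>b\<in>B. c b = 0)"
    and CB: "C = {(\<lambda>i. \<Sum>b\<in>B. c b * b i) | c. True}"
    using assms unfolding linear_code_def by blast
  define L where "L c = (\<lambda>i. \<Sum>b\<in>B. c b * b i)" for c :: "(nat \<Rightarrow> bit) \<Rightarrow> bit"
  have img: "L ` PiE B (\<lambda>_. UNIV) = C"
  proof
    show "L ` PiE B (\<lambda>_. UNIV) \<subseteq> C" unfolding CB L_def by auto
    show "C \<subseteq> L ` PiE B (\<lambda>_. UNIV)"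
    proof
      fix x assume "x \<in> C"
      then obtain c where x: "x = L c" unfolding CB L_def by auto
      have "L (restrict c B) = L c" unfolding L_def by (intro ext sum.cong refl) simp
      moreover have "restrict c B \<in> PiE B (\<lambda>_. UNIV)" by auto
      ultimately show "x \<in> L ` PiE B (\<lambda>_. UNIV)" using x by (metis image_eqI)
    qed
  qed
  have inj: "inj_on L (PiE B (\<lambda>_. UNIV))"
  proof
    fix c c' assume c: "c \<in> PiE B (\<lambda>_. UNIV)" and c': "c' \<in> PiE B (\<lambda>_. UNIV)" and eq: "L c = L c'"
    have "\<forall>i. (\<Sum>b\<in>B. (c b + c' b) * b i) = 0"
    proof
      fix i
      have "(\<Sum>b\<in>B. (c b + c' b) * b i) = L c i + L c' i"
        unfolding L_def by (simp add: distrib_right sum.distrib)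
      also have "\<dots> = 0" using eq by simp
      finally show "(\<Sum>b\<in>B. (c b + c' b) * b i) = 0" .
    qed
    hence z: "\<forall>b\<in>B. c b + c' b = 0" using ind[rule_format, of "\<lambda>b. c b + c' b"] by blast
    have "c b = c' b" if "b \<in> B" for b
    proof -
      have "c b + c' b = 0" using z that by blast
      hence "c b + (c b + c' b) = c b" by simp
      thus ?thesis by (simp add: add.assoc[symmetric])
    qed
    thus "c = c'" using c c' by (auto intro: PiE_ext)
  qed
  have "card C = card (PiE B (\<lambda>_. UNIV :: bit set))"
    using card_image[OF inj] img by simp
  also have "\<dots> = 2 ^ k" using B by (simp add: card_PiE card_UNIV_bit)
  finally show ?thesis .
qed


lemma coset_sub:
  fixes C :: "(nat \<Rightarrow> bit) set"
  assumes cl: "\<forall>x\<in>C. \<forall>y\<in>C. x + y \<in> C"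
    and x1: "x \<in> (\<lambda>c. v + c) ` C" and x2: "x \<in> (\<lambda>c. w + c) ` C"
  shows "(\<lambda>c. v + c) ` C \<subseteq> (\<lambda>c. w + c) ` C"
proof
  obtain c1 where c1: "c1 \<in> C" "x = v + c1" using x1 by blast
  obtain c2 where c2: "c2 \<in> C" "x = w + c2" using x2 by blast
  have v: "v = w + (c2 + c1)"
  proof -
    have "v = (v + c1) + c1" by (simp add: add.assoc)
    also have "\<dots> = (w + c2) + c1" using c1 c2 by simp
    also have "\<dots> = w + (c2 + c1)" by (simp add: add.assoc)
    finally show ?thesis .
  qed
  fix y assume "y \<in> (\<lambda>c. v + c) ` C"
  then obtain c where c: "c \<in> C" "y = v + c" by blast
  have "y = w + ((c2 + c1) + c)" using c v by (simp add: add.assoc)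
  moreover have "(c2 + c1) + c \<in> C" using cl c c1 c2 by blast
  ultimately show "y \<in> (\<lambda>c. w + c) ` C" by blast
qed

lemma part2:
  assumes lc: "linear_code n k C" and gd: "S_good n \<beta> p C"
  shows "\<exists>(M::nat) (G :: nat \<Rightarrow> (nat \<Rightarrow> bit) set). M = 2 ^ (n - k) \<and> 0 < M \<and>
            (\<forall>i\<in>{1..M}. S_good n \<beta> p (G i)) \<and>
            (\<forall>i\<in>{1..M}. \<forall>j\<in>{1..M}. i \<noteq> j \<longrightarrow> G i \<inter> G j = {})"
proof -
  have CV: "C \<subseteq> Vn n" and cl: "\<forall>x\<in>C. \<forall>y\<in>C. x + y \<in> C" and C0: "0 \<in> C"
    using lc unfolding linear_code_def by blast+
  define cos where "cos v = (\<lambda>c. v + c) ` C" for v :: "nat \<Rightarrow> bit"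
  define Q where "Q = cos ` Vn n"
  have finV: "finite (Vn n)" and cardV: "card (Vn n) = 2 ^ n" using card_Vn by blast+
  have finC: "finite C" using CV finV finite_subset by blast
  have cardC: "card C = 2 ^ k" using card_code[OF lc] .
  have cosV: "cos v \<subseteq> Vn n" if "v \<in> Vn n" for v
    using that CV Vn_add unfolding cos_def by blast
  have cardcos: "card (cos v) = card C" for v
    unfolding cos_def by (rule card_image) (auto intro: inj_onI)
  have disj: "cos v \<inter> cos w = {}" if "cos v \<noteq> cos w" for v w
  proof (rule ccontr)
    assume "cos v \<inter> cos w \<noteq> {}"
    then obtain x where "x \<in> cos v" "x \<in> cos w" by blast
    hence "cos v \<subseteq> cos w" "cos w \<subseteq> cos v" unfolding cos_def using coset_sub[OF cl] by blast+
    thus False using that by blast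
  qed
  have union: "\<Union>Q = Vn n"
  proof
    show "\<Union>Q \<subseteq> Vn n" unfolding Q_def using cosV by blast
    show "Vn n \<subseteq> \<Union>Q"
    proof
      fix v assume "v \<in> Vn n"
      moreover have "v \<in> cos v" unfolding cos_def using C0 by (metis add_0_right image_eqI)
      ultimately show "v \<in> \<Union>Q" unfolding Q_def by blast
    qed
  qed
  have finQ: "finite Q" unfolding Q_def using finV by simp
  have "card C * card Q = card (\<Union>Q)"
  proof (rule card_partition)
    show "finite Q" by (rule finQ)
    show "finite (\<Union>Q)" using union finV by simp
    show "\<And>c. c\<in>Q \<Longrightarrow> card c = card C" unfolding Q_def using cardcos by blast
    show "\<And>c1 c2. c1\<in>Q \<Longrightarrow> c2\<in>Q \<Longrightarrow> c1 \<noteq> c2 \<Longrightarrow> c1 \<inter> c2 = {}" unfolding Q_def using disj by blast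
  qed
  hence eq: "2 ^ k * card Q = (2::nat) ^ n" using cardC cardV union by simp
  have Qpos: "card Q > 0"
  proof -
    have "Q \<noteq> {}" unfolding Q_def using Vn_zero by blast
    thus ?thesis using finQ by (simp add: card_gt_0_iff)
  qed
  have kn: "k \<le> n"
  proof (rule ccontr)
    assume "\<not> k \<le> n"
    hence "(2::nat) ^ n < 2 ^ k" by simp
    also have "\<dots> \<le> 2 ^ k * card Q" using Qpos by simp
    finally show False using eq by simp
  qed
  have cardQ: "card Q = 2 ^ (n - k)"
  proof -
    have "(2::nat) ^ n = 2 ^ k * 2 ^ (n - k)" using kn by (simp flip: power_add)
    thus ?thesis using eq by simp
  qed
  have goodQ: "S_good n \<beta> p q" if "q \<in> Q" for q
  proof -
    obtain v where v: "v \<in> Vn n" "q = cos v" using \<open>q \<in> Q\<close> unfolding Q_def by blast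
    have SV: "Sset n \<beta> p \<subseteq> Vn n" by (auto simp: Sset_def window_weight_limited_def)
    have "setplus (Sset n \<beta> p) q = Vn n"
    proof
      show "setplus (Sset n \<beta> p) q \<subseteq> Vn n"
        using SV cosV[OF v(1)] v(2) Vn_add unfolding setplus_def by blast
      show "Vn n \<subseteq> setplus (Sset n \<beta> p) q"
      proof
        fix w assume w: "w \<in> Vn n"
        hence "w + v \<in> setplus (Sset n \<beta> p) C" using gd v Vn_add by (simp add: S_good_def)
        then obtain s c where sc: "w + v = s + c" "s \<in> Sset n \<beta> p" "c \<in> C"
          unfolding setplus_def by blast
        have "w = (w + v) + v" by (simp add: add.assoc)
        also have "\<dots> = s + (v + c)" using sc by (simp add: add_ac)
        finally have "w = s + (v + c)" .
        moreover have "v + c \<in> q" using v sc unfolding cos_def by blast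
        ultimately show "w \<in> setplus (Sset n \<beta> p) q" using sc unfolding setplus_def by blast
      qed
    qed
    thus ?thesis using cosV v by (simp add: S_good_def)
  qed
  obtain h where h: "bij_betw h {1..card Q} Q" using ex_bij_betw_nat_finite_1[OF finQ] by blast
  have "\<forall>i\<in>{1..card Q}. S_good n \<beta> p (h i)" using h goodQ bij_betwE by blast
  moreover have "\<forall>i\<in>{1..card Q}. \<forall>j\<in>{1..card Q}. i \<noteq> j \<longrightarrow> h i \<inter> h j = {}"
  proof (intro ballI impI)
    fix i j assume ij: "i \<in> {1..card Q}" "j \<in> {1..card Q}" "i \<noteq> j"
    hence "h i \<noteq> h j" using h by (metis bij_betw_iff_bijections)
    moreover have "h i \<in> Q" "h j \<in> Q" using h ij bij_betwE by blast+
    ultimately show "h i \<inter> h j = {}" using disj unfolding Q_def by blast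
  qed
  ultimately show ?thesis using cardQ Qpos by blast
qed

theorem lemma5:
  fixes \<beta> p n :: nat
  assumes "0 < \<beta>" and "0 < p" and "0 < n"
  shows "(\<forall>(M::nat) (G :: nat \<Rightarrow> (nat \<Rightarrow> bit) set).
            0 < M \<and> (\<forall>i\<in>{1..M}. S_good n \<beta> p (G i)) \<and>
            (\<forall>i\<in>{1..M}. \<forall>j\<in>{1..M}. i \<noteq> j \<longrightarrow> G i \<inter> G j = {}) \<longrightarrow>
            (\<exists>E D. is_code n M E D \<and> constrained n \<beta> p M E))
       \<and> (\<forall>(k::nat) C. linear_code n k C \<and> S_good n \<beta> p C \<longrightarrow>
            (\<exists>(M::nat) E D. is_code n M E D \<and> constrained n \<beta> p M E \<and>
               log 2 (real M) / real n = real (n - k) / real n))"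
proof (intro conjI allI impI)
  fix M :: nat and G :: "nat \<Rightarrow> (nat \<Rightarrow> bit) set"
  assume a: "0 < M \<and> (\<forall>i\<in>{1..M}. S_good n \<beta> p (G i)) \<and>
            (\<forall>i\<in>{1..M}. \<forall>j\<in>{1..M}. i \<noteq> j \<longrightarrow> G i \<inter> G j = {})"
  show "\<exists>E D. is_code n M E D \<and> constrained n \<beta> p M E" 
    using a by (intro part1) auto
next
  fix k :: nat and C
  assume "linear_code n k C \<and> S_good n \<beta> p C"
  hence "\<exists>(M::nat) (G :: nat \<Rightarrow> (nat \<Rightarrow> bit) set). M = 2 ^ (n - k) \<and> 0 < M \<and>
            (\<forall>i\<in>{1..M}. S_good n \<beta> p (G i)) \<and>
            (\<forall>i\<in>{1..M}. \<forall>j\<in>{1..M}. i \<noteq> j \<longrightarrow> G i \<inter> G j = {})"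
    by (intro part2) auto
  then obtain M :: nat and G :: "nat \<Rightarrow> (nat \<Rightarrow> bit) set" where MG: "M = 2 ^ (n - k)" "0 < M" "\<forall>i\<in>{1..M}. S_good n \<beta> p (G i)"
    "\<forall>i\<in>{1..M}. \<forall>j\<in>{1..M}. i \<noteq> j \<longrightarrow> G i \<inter> G j = {}" by blast
  obtain E D where ED: "is_code n M E D" "constrained n \<beta> p M E"
    using part1[OF MG(2) MG(3) MG(4)] by blast
  have "real M = (2::real) ^ (n - k)" using MG(1) by simp
  hence "log 2 (real M) = real (n - k)" by (simp add: log_nat_power)
  hence "log 2 (real M) / real n = real (n - k) / real n" by simp
  with ED show "\<exists>(M::nat) E D. is_code n M E D \<and> constrained n \<beta> p M E \<and>
               log 2 (real M) / real n = real (n - k) / real n" by blast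
qed
end
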